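(* Let $D$ be an instance all of whose tuples are endogenous ($D^n=D$), let $\mathcal{Q}$ be a monotone query, and let $\bar a\in\mathcal{Q}(D)$. A tuple $t$ is a most responsible actual cause for $\bar a$ if and only if there is $D'\subseteq D$ with $t\in(D\smallsetminus D')\subseteq D^n$ and $(D,D',\bar a)\in\mathcal{MSSEP}^{c}(\mathcal{Q})$.
   Context: A query $\mathcal{Q}$ is monotone if $D_1\subseteq D_2$ implies $\mathcal{Q}(D_1)\subseteq\mathcal{Q}(D_2)$; $D\models\mathcal{Q}(\bar a)$ means $\bar a\in\mathcal{Q}(D)$. A tuple $\tau\in D^n$ is an actual cause for $\bar a$ if there is $\Gamma\subseteq D^n$ (contingency set) with $D\smallsetminus\Gamma\models\mathcal{Q}(\bar a)$ and $D\smallsetminus(\Gamma\cup\{\tau\})\not\models\mathcal{Q}(\bar a)$. The responsibility of an actual cause $\tau$ is $1/(|\Gamma|+1)$ with $\Gamma$ a minimum-size contingency set for $\tau$; a most responsible actual cause is an actual cause of maximum responsibility. $\mathcal{MSSEP}^{c}(\mathcal{Q})$ is the set of triples $(D,D',\bar a)$ with $\bar a\in\mathcal{Q}(D)$, $D'\subseteq D$, $\bar a\notin\mathcal{Q}(D')$, and $D'$ of maximum cardinality among subsets of $D$ with this last property. *)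

theory Defs
  imports Complex_Main
begin

text \<open>Instances are finite sets of tuples of type 'a; a query maps an instance
  to its set of answers (of type 'b). Dn is the set of endogenous tuples.\<close>

definition monotone_query :: "('a set \<Rightarrow> 'b set) \<Rightarrow> bool" where
  "monotone_query Q \<longleftrightarrow> (\<forall>D1 D2. D1 \<subseteq> D2 \<longrightarrow> Q D1 \<subseteq> Q D2)"

definition is_contingency ::
  "('a set \<Rightarrow> 'b set) \<Rightarrow> 'a set \<Rightarrow> 'a set \<Rightarrow> 'b \<Rightarrow> 'a \<Rightarrow> 'a set \<Rightarrow> bool" where
  "is_contingency Q D Dn a t \<Gamma> \<longleftrightarrow>
     \<Gamma> \<subseteq> Dn \<and> a \<in> Q (D - \<Gamma>) \<and> a \<notin> Q (D - (\<Gamma> \<union> {t}))"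

definition actual_cause ::
  "('a set \<Rightarrow> 'b set) \<Rightarrow> 'a set \<Rightarrow> 'a set \<Rightarrow> 'b \<Rightarrow> 'a \<Rightarrow> bool" where
  "actual_cause Q D Dn a t \<longleftrightarrow> t \<in> Dn \<and> (\<exists>\<Gamma>. is_contingency Q D Dn a t \<Gamma>)"

definition responsibility ::
  "('a set \<Rightarrow> 'b set) \<Rightarrow> 'a set \<Rightarrow> 'a set \<Rightarrow> 'b \<Rightarrow> 'a \<Rightarrow> real" where
  "responsibility Q D Dn a t =
     (if actual_cause Q D Dn a t
      then 1 / (real (LEAST k. \<exists>\<Gamma>. is_contingency Q D Dn a t \<Gamma> \<and> card \<Gamma> = k) + 1)
      else 0)"

definition most_responsible_cause ::
  "('a set \<Rightarrow> 'b set) \<Rightarrow> 'a set \<Rightarrow> 'a set \<Rightarrow> 'b \<Rightarrow> 'a \<Rightarrow> bool" where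
  "most_responsible_cause Q D Dn a t \<longleftrightarrow>
     actual_cause Q D Dn a t \<and>
     (\<forall>t'. actual_cause Q D Dn a t' \<longrightarrow> responsibility Q D Dn a t' \<le> responsibility Q D Dn a t)"

definition MSSEP_c :: "('a set \<Rightarrow> 'b set) \<Rightarrow> ('a set \<times> 'a set \<times> 'b) set" where
  "MSSEP_c Q = {(D, D', a). a \<in> Q D \<and> D' \<subseteq> D \<and> a \<notin> Q D' \<and>
     (\<forall>D''. D'' \<subseteq> D \<and> a \<notin> Q D'' \<longrightarrow> card D'' \<le> card D')}"

end

theory Submission
  imports Defs
begin

lemma cont_card:
  assumes "finite D" "t \<in> D" "is_contingency Q D D a t \<Gamma>"
  shows "t \<notin> \<Gamma> \<and> card (D - (\<Gamma> \<union> {t})) + card \<Gamma> + 1 = card D"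
proof -
  have G: "\<Gamma> \<subseteq> D" "a \<in> Q (D - \<Gamma>)" "a \<notin> Q (D - (\<Gamma> \<union> {t}))"
    using assms(3) unfolding is_contingency_def by auto
  have tn: "t \<notin> \<Gamma>" proof
    assume "t \<in> \<Gamma>" then have "\<Gamma> \<union> {t} = \<Gamma>" by auto
    with G show False by simp
  qed
  have fG: "finite \<Gamma>" using G(1) assms(1) finite_subset by blast
  have c1: "card (\<Gamma> \<union> {t}) = card \<Gamma> + 1" using tn fG by simp
  have "card (D - (\<Gamma> \<union> {t})) = card D - card (\<Gamma> \<union> {t})"
    using G(1) assms(2) fG by (intro card_Diff_subset) auto
  moreover have "card (\<Gamma> \<union> {t}) \<le> card D"
    using G(1) assms by (intro card_mono) auto
  ultimately show ?thesis using tn c1 by simp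
qed

lemma least_props:
  assumes "actual_cause Q D Dn a t"
  shows "\<exists>\<Gamma>. is_contingency Q D Dn a t \<Gamma> \<and> card \<Gamma> = (LEAST k. \<exists>\<Gamma>. is_contingency Q D Dn a t \<Gamma> \<and> card \<Gamma> = k)"
    and "\<And>\<Gamma>. is_contingency Q D Dn a t \<Gamma> \<Longrightarrow> (LEAST k. \<exists>\<Gamma>. is_contingency Q D Dn a t \<Gamma> \<and> card \<Gamma> = k) \<le> card \<Gamma>"
proof -
  obtain \<Gamma> where "is_contingency Q D Dn a t \<Gamma>" using assms unfolding actual_cause_def by blast
  then have "\<exists>k \<Gamma>. is_contingency Q D Dn a t \<Gamma> \<and> card \<Gamma> = k" by blast
  then show "\<exists>\<Gamma>. is_contingency Q D Dn a t \<Gamma> \<and> card \<Gamma> = (LEAST k. \<exists>\<Gamma>. is_contingency Q D Dn a t \<Gamma> \<and> card \<Gamma> = k)"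
    by (rule LeastI_ex)
next
  fix \<Gamma> assume "is_contingency Q D Dn a t \<Gamma>"
  then show "(LEAST k. \<exists>\<Gamma>. is_contingency Q D Dn a t \<Gamma> \<and> card \<Gamma> = k) \<le> card \<Gamma>"
    by (intro Least_le) blast
qed

lemma inv_le_iff: "1 / (real y + 1) \<le> 1 / (real x + 1) \<longleftrightarrow> (x::nat) \<le> y"
proof -
  have "0 < real x + 1" "0 < real y + 1" by simp_all
  then have "1 / (real y + 1) \<le> 1 / (real x + 1) \<longleftrightarrow> real x + 1 \<le> real y + 1"
    by (simp add: divide_le_eq le_divide_eq)
  then show ?thesis by simp
qed

lemma inv_le: "(x::nat) \<le> y \<Longrightarrow> 1 / (real y + 1) \<le> 1 / (real x + 1)"
  using inv_le_iff by blast

lemma inv_le_rev: "1 / (real y + 1) \<le> 1 / (real x + 1) \<Longrightarrow> (x::nat) \<le> y"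
  using inv_le_iff by blast

theorem proposition11:
  fixes Q :: "'a set \<Rightarrow> 'b set" and D Dn :: "'a set" and a :: 'b and t :: 'a
  assumes "finite D" and "Dn = D" and "monotone_query Q" and "a \<in> Q D"
  shows "most_responsible_cause Q D Dn a t \<longleftrightarrow>
         (\<exists>D'. D' \<subseteq> D \<and> t \<in> D - D' \<and> D - D' \<subseteq> Dn \<and> (D, D', a) \<in> MSSEP_c Q)"
proof -
  define L where "L s = (LEAST k. \<exists>\<Gamma>. is_contingency Q D D a s \<Gamma> \<and> card \<Gamma> = k)" for s
  have resp: "responsibility Q D D a s = 1 / (real (L s) + 1)" if "actual_cause Q D D a s" for s
    using that unfolding responsibility_def L_def by simp
  have maxadd: "a \<in> Q (D' \<union> {s})" if "(D, D', a) \<in> MSSEP_c Q" "s \<in> D - D'" for D' s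
  proof (rule ccontr)
    assume na: "a \<notin> Q (D' \<union> {s})"
    from that have sub: "D' \<subseteq> D" and mx: "\<forall>D''. D'' \<subseteq> D \<and> a \<notin> Q D'' \<longrightarrow> card D'' \<le> card D'"
      unfolding MSSEP_c_def by auto
    have "card (D' \<union> {s}) \<le> card D'" using mx na sub that(2) by auto
    moreover have "card (D' \<union> {s}) = card D' + 1"
      proof -
      have "finite D'" using sub assms(1) finite_subset by blast
      then show ?thesis using that(2) by simp
    qed
    ultimately show False by simp
  qed
  have mk: "is_contingency Q D D a s (D - D' - {s}) \<and> card (D - D' - {s}) + card D' + 1 = card D"
    if M: "(D, D', a) \<in> MSSEP_c Q" "s \<in> D - D'" for D' s
  proof -
    have sub: "D' \<subseteq> D" "a \<notin> Q D'" using M unfolding MSSEP_c_def by auto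
    have e1: "D - (D - D' - {s}) = D' \<union> {s}" using sub M(2) by auto
    have e2: "D - ((D - D' - {s}) \<union> {s}) = D'" using sub M(2) by auto
    have c: "is_contingency Q D D a s (D - D' - {s})"
      unfolding is_contingency_def using e1 e2 maxadd[OF M] sub by auto
    have "card (D - D' - {s}) = card (D - D') - 1" using M(2) assms(1) by simp
    moreover have "card (D - D') = card D - card D'"
      using sub assms(1) finite_subset by (intro card_Diff_subset) auto
    moreover have "card D' < card D" using sub M(2) assms(1) by (intro psubset_card_mono) auto
    moreover have "card D' + 1 \<le> card D" using calculation by simp
    ultimately show ?thesis using c by simp
  qed
  show ?thesis
  proof
    assume mr: "most_responsible_cause Q D Dn a t"
    then have ac: "actual_cause Q D D a t" using assms(2) unfolding most_responsible_cause_def by simp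
    have tD: "t \<in> D" using ac unfolding actual_cause_def by simp
    obtain \<Gamma> where G: "is_contingency Q D D a t \<Gamma>" "card \<Gamma> = L t"
      using least_props(1)[OF ac] unfolding L_def by blast
    define D' where "D' = D - (\<Gamma> \<union> {t})"
    have cc: "t \<notin> \<Gamma>" "card D' + card \<Gamma> + 1 = card D"
      using cont_card[OF assms(1) tD G(1)] unfolding D'_def by auto
    have naD': "a \<notin> Q D'" using G(1) unfolding is_contingency_def D'_def by simp
    have "card D'' \<le> card D'" if "D'' \<subseteq> D" "a \<notin> Q D''" for D''
    proof -
      define S where "S = {X. X \<subseteq> D \<and> a \<notin> Q X}"
      have fS: "finite (card ` S)" using assms(1) unfolding S_def by simp
      have "card D'' \<in> card ` S" using that unfolding S_def by auto
      then have neS: "card ` S \<noteq> {}" by auto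
      have "Max (card ` S) \<in> card ` S" using fS neS by simp
      then obtain M where MS: "M \<in> S" "card M = Max (card ` S)" by auto
      have Mss: "(D, M, a) \<in> MSSEP_c Q" unfolding MSSEP_c_def using MS assms(4) fS
        unfolding S_def by auto
      have "M \<noteq> D" using MS assms(4) unfolding S_def by auto
      then obtain s where s: "s \<in> D - M" using MS unfolding S_def by auto
      from mk[OF Mss s] have c: "is_contingency Q D D a s (D - M - {s})"
        and cm: "card (D - M - {s}) + card M + 1 = card D" by auto
      have acs: "actual_cause Q D D a s" unfolding actual_cause_def using c s by auto
      have "L s \<le> card (D - M - {s})" using least_props(2)[OF acs c] unfolding L_def by simp
      moreover have "responsibility Q D D a s \<le> responsibility Q D D a t"
        using mr acs assms(2) unfolding most_responsible_cause_def by simp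
      then have "L t \<le> L s" using resp[OF acs] resp[OF ac] inv_le_rev by simp
      moreover have "card D'' \<le> card M" using MS that fS unfolding S_def by auto
      ultimately show ?thesis using cm cc G(2) by simp
    qed
    then have "(D, D', a) \<in> MSSEP_c Q" unfolding MSSEP_c_def using naD' assms(4) D'_def by auto
    moreover have "t \<in> D - D'" using tD D'_def by simp
    ultimately show "\<exists>D'. D' \<subseteq> D \<and> t \<in> D - D' \<and> D - D' \<subseteq> Dn \<and> (D, D', a) \<in> MSSEP_c Q"
      using assms(2) D'_def by blast
  next
    assume "\<exists>D'. D' \<subseteq> D \<and> t \<in> D - D' \<and> D - D' \<subseteq> Dn \<and> (D, D', a) \<in> MSSEP_c Q"
    then obtain D' where M: "(D, D', a) \<in> MSSEP_c Q" "t \<in> D - D'" by blast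
    from mk[OF M] have c: "is_contingency Q D D a t (D - D' - {t})"
      and cm: "card (D - D' - {t}) + card D' + 1 = card D" by auto
    have ac: "actual_cause Q D D a t" unfolding actual_cause_def using c M(2) by auto
    have Lt: "L t \<le> card (D - D' - {t})" using least_props(2)[OF ac c] unfolding L_def by simp
    have mx: "\<forall>D''. D'' \<subseteq> D \<and> a \<notin> Q D'' \<longrightarrow> card D'' \<le> card D'"
      using M(1) unfolding MSSEP_c_def by auto
    have "responsibility Q D D a s \<le> responsibility Q D D a t" if acs: "actual_cause Q D D a s" for s
    proof -
      have sD: "s \<in> D" using acs unfolding actual_cause_def by simp
      obtain \<Gamma> where G: "is_contingency Q D D a s \<Gamma>" "card \<Gamma> = L s"
        using least_props(1)[OF acs] unfolding L_def by blast
      have cc: "card (D - (\<Gamma> \<union> {s})) + card \<Gamma> + 1 = card D"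
        using cont_card[OF assms(1) sD G(1)] by auto
      have "a \<notin> Q (D - (\<Gamma> \<union> {s}))" using G(1) unfolding is_contingency_def by simp
      then have "card (D - (\<Gamma> \<union> {s})) \<le> card D'" using mx by auto
      then have "L t \<le> L s" using cc cm Lt G(2) by simp
      then show ?thesis using resp[OF acs] resp[OF ac] inv_le by simp
    qed
    then show "most_responsible_cause Q D Dn a t"
      unfolding most_responsible_cause_def using ac assms(2) by simp
  qed
qed

end
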